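(* Let $E=\begin{pmatrix}A& C\\ C^{\sf T}& B\end{pmatrix}$ be an extreme point of $\mathcal{E}_{n+m}$, where $A$ is $n\times n$, $B$ is $m\times m$, and $\mathrm{rank}(A)=\mathrm{rank}(E)=n$. Let $\Lambda=(\lambda_{ij})$ be a real $n\times m$ matrix with $C=A\Lambda$ and $B=\Lambda^{\sf T}A\Lambda$ (such a matrix exists). Let $X_1,\ldots,X_n$ be $d\times d$ Hermitian matrices satisfying $$X_i^2=I_d \text{ for all } i\in\{1,\ldots,n\},\qquad \Big(\sum_{i=1}^n\lambda_{ij}X_i\Big)^2=I_d \text{ for all } j\in\{1,\ldots,m\}.$$ Then $$\Big(\sum_{i=1}^n\mu_iX_i\Big)^2=(\mu^{\sf T}A\mu)\,I_d\quad\text{for all }\mu=(\mu_i)\in\mathbb{R}^n.$$ In particular, the complex algebra $\mathbb{C}[X_1,\ldots,X_n]$ generated by $X_1,\ldots,X_n$ is isomorphic to the rank-$n$ Clifford algebra $\mathcal{C}_n$, and consequently $d\ge 2^{\lfloor n/2\rfloor}$.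
   Context: $\mathcal{E}_{N}$ is the elliptope: the set of real symmetric positive semidefinite $N\times N$ matrices with all diagonal entries equal to $1$; an extreme point is a point not expressible as a proper convex combination of two distinct points of $\mathcal{E}_N$. The rank-$n$ Clifford algebra $\mathcal{C}_n$ is the universal $C^*$-algebra generated by Hermitian indeterminates $z_1,\ldots,z_n$ subject to $z_iz_j+z_jz_i=2\delta_{ij}I$ for all $i,j$. *)

theory Defs
  imports "HOL-Analysis.Analysis"
begin

definition psd_mat :: "real^'k^'k \<Rightarrow> bool" where
  "psd_mat M \<longleftrightarrow> transpose M = M \<and> (\<forall>x. 0 \<le> x \<bullet> (M *v x))"

definition elliptope :: "(real^'k^'k) set" where
  "elliptope = {M. psd_mat M \<and> (\<forall>i. M $ i $ i = 1)}"

definition cadjoint :: "complex^'d^'d \<Rightarrow> complex^'d^'d" where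
  "cadjoint M = (\<chi> i j. cnj (M $ j $ i))"

definition hermitian_cmat :: "complex^'d^'d \<Rightarrow> bool" where
  "hermitian_cmat M \<longleftrightarrow> cadjoint M = M"

definition blkA :: "real^('n::finite+'m::finite)^('n+'m) \<Rightarrow> real^'n^'n" where
  "blkA E = (\<chi> i j. E $ Inl i $ Inl j)"
definition blkB :: "real^('n::finite+'m::finite)^('n+'m) \<Rightarrow> real^'m^'m" where
  "blkB E = (\<chi> i j. E $ Inr i $ Inr j)"
definition blkC :: "real^('n::finite+'m::finite)^('n+'m) \<Rightarrow> real^'m^'n" where
  "blkC E = (\<chi> i j. E $ Inl i $ Inr j)"

end

theory Submission
  imports Defs
begin


lemma cmv_scaleR: "(M::complex^'d^'d) *v (r *\<^sub>R v) = r *\<^sub>R (M *v v)"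
  using matrix_vector_mul_linear[of M] by (simp add: linear_iff)
lemma cmv_add: "(M::complex^'d^'d) *v (v + w) = M *v v + M *v w"
  using matrix_vector_mul_linear[of M] by (simp add: linear_iff)
lemma cmv_neg: "(M::complex^'d^'d) *v (- v) = - (M *v v)"
  by (simp add: matrix_vector_mult_def vec_eq_iff sum_negf)
lemma cmv_smult: "(M::complex^'d^'d) *v (c *s v) = c *s (M *v v)"
  by (simp add: matrix_vector_mult_def vec_eq_iff sum_distrib_left mult_ac)
lemma cscaleR_mv: "((r::real) *\<^sub>R (M::complex^'d^'d)) *v v = r *\<^sub>R (M *v v)"
  by (simp add: matrix_vector_mult_def vec_eq_iff scaleR_sum_right)

lemma matrix_add_rdistrib': "((A::'a::semiring_1^'n^'m) + B) ** C = A ** C + B ** C"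
  by (vector matrix_matrix_mult_def sum.distrib[symmetric] field_simps)

lemma base_dim:
  fixes V :: "(complex^'d) set"
  assumes "subspace V" "v \<in> V" "v \<noteq> 0" "\<i> *s v \<in> V"
  shows "2 \<le> dim V"
proof -
  have "\<i> *s v \<notin> span {v}"
  proof
    assume "\<i> *s v \<in> span {v}"
    then obtain k where k: "\<i> *s v = k *\<^sub>R v" by (auto simp: span_singleton)
    obtain i where i: "v $ i \<noteq> 0" using assms(3) by (metis vec_eq_iff zero_index)
    have "\<i> * v $ i = complex_of_real k * v $ i" using k
      by (metis vector_scalar_mult_def vec_lambda_beta scaleR_conv_of_real vector_scaleR_component)
    then have "\<i> = complex_of_real k" using i by simp
    then show False by (metis Im_complex_of_real imaginary_unit.sel(2) zero_neq_one)
  qed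
  then have "dim {\<i> *s v, v} = 2" using assms(3) by (simp add: dim_insert)
  moreover have "dim {\<i> *s v, v} \<le> dim V"
    using assms by (intro dim_subset) auto
  ultimately show ?thesis by simp
qed



lemma sym_form: assumes "transpose (A::real^'n^'n) = A" shows "b \<bullet> (A *v a) = a \<bullet> (A *v b)"
proof -
  have s: "A $ i $ j = A $ j $ i" for i j using assms by (metis transpose_def vec_lambda_beta)
  have "b \<bullet> (A *v a) = (\<Sum>i\<in>UNIV. \<Sum>j\<in>UNIV. b $ i * A $ i $ j * a $ j)"
    by (simp add: inner_vec_def matrix_vector_mult_def sum_distrib_left mult.assoc)
  also have "\<dots> = (\<Sum>j\<in>UNIV. \<Sum>i\<in>UNIV. b $ i * A $ i $ j * a $ j)" by (rule sum.swap)
  also have "\<dots> = a \<bullet> (A *v b)"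
    by (simp add: inner_vec_def matrix_vector_mult_def sum_distrib_left s mult_ac)
  finally show ?thesis .
qed

lemma perp_dim:
  fixes A :: "real^'n^'n"
  assumes "subspace U" "\<mu> \<in> U" "\<mu> \<bullet> (A *v \<mu>) = 1"
  shows "subspace {\<nu>\<in>U. \<nu> \<bullet> (A *v \<mu>) = 0} \<and> dim U \<le> dim {\<nu>\<in>U. \<nu> \<bullet> (A *v \<mu>) = 0} + 1"
proof -
  let ?U1 = "{\<nu>\<in>U. \<nu> \<bullet> (A *v \<mu>) = 0}"
  have "?U1 = U \<inter> {x. x \<bullet> (A *v \<mu>) = 0}" by blast
  then have s: "subspace ?U1" using subspace_inter[OF assms(1) subspace_hyperplane2[of "A *v \<mu>"]] by simp
  have "U \<subseteq> span (insert \<mu> ?U1)"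
  proof
    fix \<nu> assume nu: "\<nu> \<in> U"
    define c where "c = \<nu> \<bullet> (A *v \<mu>)"
    have "\<nu> - c *\<^sub>R \<mu> \<in> ?U1" using nu assms
    proof -
      have "\<nu> - c *\<^sub>R \<mu> \<in> U" using nu assms(1,2) by (simp add: subspace_diff subspace_scale)
      moreover have "(\<nu> - c *\<^sub>R \<mu>) \<bullet> (A *v \<mu>) = 0" using assms(3) by (simp add: inner_diff_left c_def)
      ultimately show ?thesis by blast
    qed
    then have "(\<nu> - c *\<^sub>R \<mu>) + c *\<^sub>R \<mu> \<in> span (insert \<mu> ?U1)"
      by (intro span_add span_scale span_base) auto
    then show "\<nu> \<in> span (insert \<mu> ?U1)" by simp
  qed
  then have "dim U \<le> dim (insert \<mu> ?U1)"
    using dim_subset[of U "span (insert \<mu> ?U1)"] by simp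
  also have "\<dots> \<le> dim ?U1 + 1" unfolding dim_insert by simp
  finally show ?thesis using s by simp
qed

lemma nonzero_in:
  fixes U :: "'a::euclidean_space set"
  assumes "1 \<le> dim U" obtains \<mu> where "\<mu> \<in> U" "\<mu> \<noteq> 0"
proof -
  have "\<not> U \<subseteq> {0}" using assms dim_eq_0[of U] by linarith
  then show ?thesis using that by blast
qed

lemma normalize_in:
  fixes A :: "real^'n^'n"
  assumes "subspace U" "\<mu> \<in> U" "\<mu> \<noteq> 0" "\<And>a. a \<noteq> 0 \<Longrightarrow> 0 < a \<bullet> (A *v a)"
  obtains \<nu> where "\<nu> \<in> U" "\<nu> \<bullet> (A *v \<nu>) = 1"
proof -
  define q where "q = \<mu> \<bullet> (A *v \<mu>)"
  have q: "q > 0" using assms(4)[OF assms(3)] q_def by simp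
  define r where "r = 1 / sqrt q"
  define \<nu> where "\<nu> = r *\<^sub>R \<mu>"
  have nu: "\<nu> \<in> U" using subspace_scale[OF assms(1) assms(2)] by (simp add: \<nu>_def)
  have e1: "\<nu> \<bullet> (A *v \<nu>) = r * (r * q)"
    unfolding \<nu>_def q_def by (simp add: matrix_vector_mult_scaleR)
  have e2: "sqrt q * sqrt q = q" using q by simp
  have "r * (r * q) = q / (sqrt q * sqrt q)" unfolding r_def by simp
  also have "\<dots> = 1" using e2 q by simp
  finally have "\<nu> \<bullet> (A *v \<nu>) = 1" using e1 by simp
  with nu show ?thesis using that by blast
qed



lemma mv_sum: "(G::real^'n^'m) *v (\<Sum>q\<in>S. f q) = (\<Sum>q\<in>S. G *v f q)"
  using linear_sum[OF matrix_vector_mul_linear[of G]] by (simp add: o_def)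

lemma quad_rep:
  fixes M :: "real^'k^'k" and G :: "real^'n^'n" and w :: "'k \<Rightarrow> real^'n"
  assumes "\<And>p q. M $ p $ q = w p \<bullet> (G *v w q)"
  shows "x \<bullet> (M *v x) = (\<Sum>p\<in>UNIV. x $ p *\<^sub>R w p) \<bullet> (G *v (\<Sum>p\<in>UNIV. x $ p *\<^sub>R w p))"
proof -
  have "(\<Sum>p\<in>UNIV. x $ p *\<^sub>R w p) \<bullet> (G *v (\<Sum>p\<in>UNIV. x $ p *\<^sub>R w p))
      = (\<Sum>q\<in>UNIV. \<Sum>p\<in>UNIV. x $ q * (x $ p * (w p \<bullet> (G *v w q))))"
    by (simp add: mv_sum matrix_vector_mult_scaleR inner_sum_left inner_sum_right sum_distrib_left)
  also have "\<dots> = (\<Sum>p\<in>UNIV. \<Sum>q\<in>UNIV. x $ q * (x $ p * (w p \<bullet> (G *v w q))))"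
    by (rule sum.swap)
  also have "\<dots> = (\<Sum>p\<in>UNIV. \<Sum>q\<in>UNIV. x $ p * (x $ q * (w p \<bullet> (G *v w q))))"
    by (simp add: mult_ac)
  also have "\<dots> = x \<bullet> (M *v x)"
    by (simp add: inner_vec_def matrix_vector_mult_def assms sum_distrib_left mult_ac)
  finally show ?thesis by simp
qed

lemma expand_quad:
  fixes A :: "real^'n^'n"
  shows "(y + r *\<^sub>R z) \<bullet> (A *v (y + r *\<^sub>R z)) = y \<bullet> (A *v y) + r * (y \<bullet> (A *v z)) + r * (z \<bullet> (A *v y)) + r * r * (z \<bullet> (A *v z))"
  by (simp add: matrix_vector_right_distrib matrix_vector_mult_scaleR inner_add_left inner_add_right algebra_simps)

lemma psd_kernel:
  fixes A :: "real^'n^'n"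
  assumes psd: "\<And>x. 0 \<le> x \<bullet> (A *v x)" and sym: "transpose A = A" and y: "y \<bullet> (A *v y) = 0"
  shows "A *v y = 0"
proof -
  define z where "z = A *v y"
  define c where "c = z \<bullet> z"
  define d where "d = z \<bullet> (A *v z)"
  have d: "0 \<le> d" using psd d_def by simp
  have c: "0 \<le> c" using c_def by simp
  have yz: "y \<bullet> (A *v z) = c" using sym_form[OF sym, of y z] by (simp add: c_def z_def)
  define r where "r = - c / (d + 1)"
  have "0 \<le> (y + r *\<^sub>R z) \<bullet> (A *v (y + r *\<^sub>R z))" by (rule psd)
  also have "\<dots> = 2 * r * c + r * r * d"
    using expand_quad[of y r z A] y yz by (simp add: c_def d_def z_def)
  finally have "0 \<le> 2 * r * c + r * r * d" .
  then have "0 \<le> (d + 1) * (d + 1) * (2 * r * c + r * r * d)" using d by simp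
  also have "\<dots> = 2 * c * (r * (d + 1)) * (d + 1) + (r * (d + 1)) * (r * (d + 1)) * d"
    by (simp add: algebra_simps)
  also have "r * (d + 1) = - c" unfolding r_def using d by (simp add: field_simps)
  then have "2 * c * (r * (d + 1)) * (d + 1) + (r * (d + 1)) * (r * (d + 1)) * d = c * c * (d - 2 * (d + 1))"
    by (simp add: algebra_simps)
  finally have "c * c * (d + 2) \<le> 0" by (simp add: algebra_simps)
  then have "c = 0" using d c by (smt (verit) mult_nonneg_nonneg mult_pos_pos)
  then show ?thesis by (simp add: c_def z_def)
qed

lemma pd_bound:
  fixes A :: "real^'n^'n"
  assumes pd: "\<And>x. x \<noteq> 0 \<Longrightarrow> 0 < x \<bullet> (A *v x)"
  obtains m where "m > 0" "\<And>y. m * (norm y)^2 \<le> y \<bullet> (A *v y)"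
proof -
  have cont: "continuous_on (sphere 0 1) (\<lambda>y::real^'n. y \<bullet> (A *v y))"
    by (intro continuous_intros linear_continuous_on matrix_vector_mul_linear)
  have ne: "sphere (0::real^'n) 1 \<noteq> {}" by simp
  obtain u where u: "u \<in> sphere 0 1" and umin: "\<And>y. y \<in> sphere 0 1 \<Longrightarrow> u \<bullet> (A *v u) \<le> y \<bullet> (A *v y)"
    using continuous_attains_inf[OF compact_sphere ne cont] by blast
  define m where "m = u \<bullet> (A *v u)"
  have "u \<noteq> 0" using u by auto
  then have m: "m > 0" using pd m_def by auto
  have "m * (norm y)^2 \<le> y \<bullet> (A *v y)" for y
  proof (cases "y = 0")
    case True then show ?thesis by simp
  next
    case False
    define v where "v = (1 / norm y) *\<^sub>R y"
    have v: "v \<in> sphere 0 1" using False by (simp add: v_def)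
    have yv: "y = norm y *\<^sub>R v" using False by (simp add: v_def)
    have "y \<bullet> (A *v y) = (norm y)^2 * (v \<bullet> (A *v v))"
      by (subst yv, subst yv) (simp add: matrix_vector_mult_scaleR power2_eq_square)
    moreover have "m \<le> v \<bullet> (A *v v)" using umin[OF v] m_def by simp
    ultimately show ?thesis by (metis mult.commute mult_right_mono zero_le_power2)
  qed
  then show ?thesis using that m by blast
qed

lemma bound_form:
  fixes S :: "real^'n^'n"
  obtains K where "K > 0" "\<And>y. \<bar>y \<bullet> (S *v y)\<bar> \<le> K * (norm y)^2"
proof -
  have "bounded_linear ((*v) S)" by (simp add: linear_conv_bounded_linear)
  then obtain K where K: "K > 0" "\<And>y. norm (S *v y) \<le> norm y * K"
    using bounded_linear.pos_bounded by blast
  have "\<bar>y \<bullet> (S *v y)\<bar> \<le> K * (norm y)^2" for y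
  proof -
    have "\<bar>y \<bullet> (S *v y)\<bar> \<le> norm y * norm (S *v y)" by (rule Cauchy_Schwarz_ineq2)
    also have "\<dots> \<le> norm y * (norm y * K)" using K(2) by (simp add: mult_left_mono)
    finally show ?thesis by (simp add: power2_eq_square mult_ac)
  qed
  then show ?thesis using that K by blast
qed



lemma transpose_lin: "transpose ((A::real^'n^'n) + s *\<^sub>R B) = transpose A + s *\<^sub>R transpose B"
  by (simp add: transpose_def vec_eq_iff)

lemma not_extreme:
  fixes E :: "real^'k^'k" and A Sm :: "real^'n^'n" and w :: "'k \<Rightarrow> real^'n"
  assumes ext: "E extreme_point_of elliptope"
    and rep: "\<And>p q. E $ p $ q = w p \<bullet> (A *v w q)"
    and Asym: "transpose A = A" and Ssym: "transpose Sm = Sm"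
    and pd: "\<And>x. x \<noteq> 0 \<Longrightarrow> 0 < x \<bullet> (A *v x)"
    and diag: "\<And>p. w p \<bullet> (Sm *v w p) = 0"
    and nz: "w p0 \<bullet> (Sm *v w q0) \<noteq> 0"
  shows False
proof -
  have Eell: "E \<in> elliptope" using ext by (simp add: extreme_point_of_def)
  then have Ediag: "E $ p $ p = 1" for p by (simp add: elliptope_def)
  obtain m where m: "m > 0" "\<And>y. m * (norm y)^2 \<le> y \<bullet> (A *v y)" using pd_bound pd by blast
  obtain K where K: "K > 0" "\<And>y. \<bar>y \<bullet> (Sm *v y)\<bar> \<le> K * (norm y)^2" using bound_form by blast
  define t where "t = m / K"
  have t: "t > 0" using m K by (simp add: t_def)
  define Ep where "Ep s = (\<chi> p q. w p \<bullet> ((A + s *\<^sub>R Sm) *v w q))" for s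
  have Ep_eq: "Ep s $ p $ q = E $ p $ q + s * (w p \<bullet> (Sm *v w q))" for s p q
    by (simp add: Ep_def rep matrix_vector_mult_add_rdistrib scaleR_matrix_vector_assoc[symmetric] inner_add_right)
  have inell: "Ep s \<in> elliptope" if s: "\<bar>s\<bar> \<le> t" for s
  proof -
    let ?G = "A + s *\<^sub>R Sm"
    have Gsym: "transpose ?G = ?G" by (simp add: transpose_lin Asym Ssym)
    have tr: "transpose (Ep s) = Ep s"
      unfolding Ep_def transpose_def using sym_form[OF Gsym] by (simp add: vec_eq_iff)
    have ps: "0 \<le> x \<bullet> (Ep s *v x)" for x
    proof -
      define y where "y = (\<Sum>p\<in>UNIV. x $ p *\<^sub>R w p)"
      have "x \<bullet> (Ep s *v x) = y \<bullet> (?G *v y)"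
        unfolding y_def by (rule quad_rep) (simp add: Ep_def)
      also have "\<dots> = y \<bullet> (A *v y) + s * (y \<bullet> (Sm *v y))"
        by (simp add: matrix_vector_mult_add_rdistrib scaleR_matrix_vector_assoc[symmetric] inner_add_right)
      finally have eq: "x \<bullet> (Ep s *v x) = y \<bullet> (A *v y) + s * (y \<bullet> (Sm *v y))" .
      have "\<bar>s * (y \<bullet> (Sm *v y))\<bar> \<le> t * (K * (norm y)^2)"
        unfolding abs_mult using s K(2)[of y] by (intro mult_mono) auto
      also have "\<dots> = m * (norm y)^2" using K by (simp add: t_def)
      finally have "\<bar>s * (y \<bullet> (Sm *v y))\<bar> \<le> m * (norm y)^2" .
      then show ?thesis using eq m(2)[of y] by linarith
    qed
    have dg: "Ep s $ p $ p = 1" for p using Ep_eq diag Ediag by simp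
    show ?thesis unfolding elliptope_def psd_mat_def using tr ps dg by blast
  qed
  have mid: "E = midpoint (Ep t) (Ep (- t))"
    by (simp add: vec_eq_iff midpoint_def Ep_eq algebra_simps)
  have ne: "Ep t \<noteq> Ep (- t)"
  proof
    assume "Ep t = Ep (- t)"
    then have "Ep t $ p0 $ q0 = Ep (- t) $ p0 $ q0" by simp
    then have "t * (w p0 \<bullet> (Sm *v w q0)) = 0" by (simp add: Ep_eq)
    then show False using t nz by simp
  qed
  have "E \<in> open_segment (Ep t) (Ep (- t))" using mid ne by simp
  moreover have "Ep t \<in> elliptope" "Ep (- t) \<in> elliptope" using inell t by auto
  ultimately show False using ext by (auto simp: extreme_point_of_def)
qed



lemma cliff_ind:
  fixes Y :: "real^'n \<Rightarrow> complex^'d^'d" and A :: "real^'n^'n"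
  assumes Yadd: "\<And>a b. Y (a + b) = Y a + Y b"
    and Ysq: "\<And>a. Y a ** Y a = (a \<bullet> (A *v a)) *\<^sub>R mat 1"
    and Asym: "transpose A = A"
    and Apd: "\<And>a. a \<noteq> 0 \<Longrightarrow> 0 < a \<bullet> (A *v a)"
  shows "subspace U \<Longrightarrow> k \<le> dim U \<Longrightarrow> subspace V \<Longrightarrow> v \<in> V \<Longrightarrow> v \<noteq> 0
    \<Longrightarrow> (\<forall>w\<in>V. \<i> *s w \<in> V) \<Longrightarrow> (\<forall>a\<in>U. \<forall>w\<in>V. Y a *v w \<in> V)
    \<Longrightarrow> 2 * 2 ^ (k div 2) \<le> dim V"
proof (induction k arbitrary: U V v rule: less_induct)
  case (less k)
  have sq: "Y a *v (Y a *v w) = (a \<bullet> (A *v a)) *\<^sub>R w" for a w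
    by (simp add: matrix_vector_mul_assoc Ysq cscaleR_mv)
  have acm: "Y a *v (Y b *v w) + Y b *v (Y a *v w) = (2 * (a \<bullet> (A *v b))) *\<^sub>R w" for a b w
  proof -
    have "Y (a+b) ** Y (a+b) = Y a ** Y a + Y b ** Y b + (Y a ** Y b + Y b ** Y a)"
      by (simp add: Yadd matrix_add_ldistrib matrix_add_rdistrib' algebra_simps)
    moreover have "(a+b) \<bullet> (A *v (a+b)) = a \<bullet> (A *v a) + b \<bullet> (A *v b) + 2 * (a \<bullet> (A *v b))"
      using sym_form[OF Asym, of b a]
      by (simp add: matrix_vector_right_distrib inner_add_left inner_add_right)
    ultimately have "Y a ** Y b + Y b ** Y a = (2 * (a \<bullet> (A *v b))) *\<^sub>R mat 1"
      using Ysq[of "a+b"] Ysq[of a] Ysq[of b] by (simp add: scaleR_add_left)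
    then have "(Y a ** Y b + Y b ** Y a) *v w = (2 * (a \<bullet> (A *v b))) *\<^sub>R w"
      by (simp add: cscaleR_mv)
    then show ?thesis by (simp add: matrix_vector_mult_add_rdistrib matrix_vector_mul_assoc)
  qed
  show ?case
  proof (cases "k < 2")
    case True
    then have "k div 2 = 0" by simp
    then show ?thesis using base_dim[OF less.prems(3,4,5)] less.prems(4,6) by simp
  next
    case False
    then have k2: "2 \<le> k" by simp
    obtain m1 where m1: "m1 \<in> U" "m1 \<noteq> 0"
      using nonzero_in[of U] less.prems(2) k2 by auto
    obtain \<mu>1 where mu1: "\<mu>1 \<in> U" "\<mu>1 \<bullet> (A *v \<mu>1) = 1"
      using normalize_in[OF less.prems(1) m1 Apd] by blast
    define U1 where "U1 = {\<nu>\<in>U. \<nu> \<bullet> (A *v \<mu>1) = 0}"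
    have U1: "subspace U1" "dim U \<le> dim U1 + 1"
      using perp_dim[OF less.prems(1) mu1] unfolding U1_def by auto
    obtain m2 where m2: "m2 \<in> U1" "m2 \<noteq> 0"
      using nonzero_in[of U1] less.prems(2) k2 U1 by auto
    obtain \<mu>2 where mu2: "\<mu>2 \<in> U1" "\<mu>2 \<bullet> (A *v \<mu>2) = 1"
      using normalize_in[OF U1(1) m2 Apd] by blast
    define U2 where "U2 = {\<nu>\<in>U1. \<nu> \<bullet> (A *v \<mu>2) = 0}"
    have U2: "subspace U2" "dim U1 \<le> dim U2 + 1"
      using perp_dim[OF U1(1) mu2] unfolding U2_def by auto
    have kU2: "k - 2 \<le> dim U2" using U1 U2 less.prems(2) by linarith
    have U2U: "U2 \<subseteq> U" unfolding U2_def U1_def by auto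
    have o12: "\<mu>2 \<bullet> (A *v \<mu>1) = 0" using mu2 U1_def by auto
    define X1 where "X1 = Y \<mu>1"
    define X2 where "X2 = Y \<mu>2"
    have X11: "X1 *v (X1 *v w) = w" for w using sq[of \<mu>1] mu1 X1_def by simp
    have X22: "X2 *v (X2 *v w) = w" for w using sq[of \<mu>2] mu2 X2_def by simp
    have X12: "X2 *v (X1 *v w) = - (X1 *v (X2 *v w))" for w
      using acm[of \<mu>2 \<mu>1 w] o12 unfolding X1_def X2_def by (simp add: eq_neg_iff_add_eq_0 add.commute)
    have XN1: "Y \<nu> *v (X1 *v w) = - (X1 *v (Y \<nu> *v w))" if "\<nu> \<in> U2" for \<nu> w
      using acm[of \<nu> \<mu>1 w] that unfolding X1_def U2_def U1_def by (simp add: eq_neg_iff_add_eq_0)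
    have XN2: "Y \<nu> *v (X2 *v w) = - (X2 *v (Y \<nu> *v w))" if "\<nu> \<in> U2" for \<nu> w
      using acm[of \<nu> \<mu>2 w] that unfolding X2_def U2_def by (simp add: eq_neg_iff_add_eq_0)
    have X1V: "w \<in> V \<Longrightarrow> X1 *v w \<in> V" for w using less.prems(7) mu1 X1_def by auto
    have X2V: "w \<in> V \<Longrightarrow> X2 *v w \<in> V" for w using less.prems(7) mu2 U1_def X2_def by auto
    define Vp where "Vp = {w\<in>V. X1 *v (X2 *v w) = (- \<i>) *s w}"
    define Vm where "Vm = {w\<in>V. X1 *v (X2 *v w) = \<i> *s w}"
    have swap: "X1 *v (X2 *v (X1 *v w)) = - (c *s (X1 *v w))" if "X1 *v (X2 *v w) = c *s w" for c w
    proof -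
      have "X2 *v w = X1 *v (X1 *v (X2 *v w))" by (simp add: X11)
      also have "\<dots> = c *s (X1 *v w)" using that by (simp add: cmv_smult)
      finally have "X2 *v w = c *s (X1 *v w)" .
      then show ?thesis by (simp add: X12 cmv_neg X11)
    qed
    have subsp: "subspace {w\<in>V. X1 *v (X2 *v w) = c *s w}" for c
    proof -
      have a: "X1 *v (X2 *v (x + y)) = c *s (x + y)" if "X1 *v (X2 *v x) = c *s x" "X1 *v (X2 *v y) = c *s y" for x y
        using that by (simp add: cmv_add vec_eq_iff algebra_simps)
      have b: "X1 *v (X2 *v (r *\<^sub>R x)) = c *s (r *\<^sub>R x)" if "X1 *v (X2 *v x) = c *s x" for x r
      proof -
        have "X1 *v (X2 *v (r *\<^sub>R x)) = r *\<^sub>R (c *s x)" using that by (simp add: cmv_scaleR)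
        also have "\<dots> = c *s (r *\<^sub>R x)" by (simp add: vec_eq_iff)
        finally show ?thesis .
      qed
      show ?thesis using less.prems(3) a b unfolding subspace_def by auto
    qed
    have negs: "- ((- c) *s w) = c *s w" for c :: complex and w :: "complex^'d"
      by (simp add: vec_eq_iff)
    have Vps: "subspace Vp" "subspace Vm" unfolding Vp_def Vm_def by (rule subsp)+
    have pm: "X1 *v w \<in> Vm" if "w \<in> Vp" for w
      using that swap[of w "- \<i>"] X1V unfolding Vp_def Vm_def by (simp add: negs)
    have mp: "X1 *v w \<in> Vp" if "w \<in> Vm" for w
      using that swap[of w "\<i>"] X1V unfolding Vp_def Vm_def by simp
    have int0: "Vp \<inter> Vm \<subseteq> {0}"
    proof
      fix w assume "w \<in> Vp \<inter> Vm"
      then have "(- \<i>) *s w = \<i> *s w" unfolding Vp_def Vm_def by auto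
      then have "w $ i = 0" for i by (simp add: vec_eq_iff)
      then show "w \<in> {0}" by (simp add: vec_eq_iff)
    qed
    have Vpi: "\<forall>w\<in>Vp. \<i> *s w \<in> Vp"
      using less.prems(6) unfolding Vp_def by (auto simp: cmv_smult vec_eq_iff mult_ac)
    have VpY: "\<forall>a\<in>U2. \<forall>w\<in>Vp. Y a *v w \<in> Vp"
    proof (intro ballI)
      fix a w assume a: "a \<in> U2" and w: "w \<in> Vp"
      have "X1 *v (X2 *v (Y a *v w)) = X1 *v (- (Y a *v (X2 *v w)))"
        using XN2[OF a, of w] by (simp add: cmv_neg)
      also have "\<dots> = Y a *v (X1 *v (X2 *v w))" using XN1[OF a] by (simp add: cmv_neg)
      also have "\<dots> = (- \<i>) *s (Y a *v w)" using w unfolding Vp_def by (simp add: cmv_smult cmv_neg)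
      finally show "Y a *v w \<in> Vp" using w a U2U less.prems(7) unfolding Vp_def by auto
    qed
    obtain u where u: "u \<in> Vp" "u \<noteq> 0"
    proof -
      define w where "w = v + \<i> *s (X1 *v (X2 *v v))"
      have wV: "w \<in> V" unfolding w_def using less.prems X1V X2V
        by (simp add: subspace_add)
      have XXw: "X1 *v (X2 *v w) = X1 *v (X2 *v v) - \<i> *s v"
      proof -
        have "X1 *v (X2 *v (X1 *v (X2 *v v))) = - v"
          using X12[of "X2 *v v"] by (simp add: X22 X11 cmv_neg)
        then show ?thesis unfolding w_def by (simp add: cmv_add cmv_smult cmv_neg)
      qed
      show thesis
      proof (cases "w = 0")
        case False
        have "(- \<i>) *s w = X1 *v (X2 *v v) - \<i> *s v" unfolding w_def
          by (simp add: vec_eq_iff ring_distribs)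
        then have "w \<in> Vp" using wV XXw unfolding Vp_def by simp
        then show thesis using that False by blast
      next
        case True
        then have vv: "v = - (\<i> *s (X1 *v (X2 *v v)))" unfolding w_def
          by (simp add: eq_neg_iff_add_eq_0)
        have "\<i> *s v = X1 *v (X2 *v v)"
          by (subst vv) (simp add: vec_eq_iff)
        then have "X1 *v (X2 *v v) = \<i> *s v" by simp
        then have "v \<in> Vm" using less.prems unfolding Vm_def by auto
        then have "X1 *v v \<in> Vp" by (rule mp)
        moreover have "X1 *v v \<noteq> 0" using less.prems(5) X11[of v] by auto
        ultimately show thesis using that by blast
      qed
    qed
    have IH: "2 * 2 ^ ((k - 2) div 2) \<le> dim Vp"
      by (rule less.IH[OF _ U2(1) kU2 Vps(1) u(1) u(2) Vpi VpY]) (use k2 in simp)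
    have linX1: "linear ((*v) X1)" by simp
    have "Vp = (*v) X1 ` ((*v) X1 ` Vp)" by (simp add: image_image X11)
    then have "dim Vp \<le> dim ((*v) X1 ` Vp)" by (metis dim_image_le linX1)
    also have "\<dots> \<le> dim Vm" using pm by (intro dim_subset) auto
    finally have d1: "dim Vp \<le> dim Vm" .
    have "dim {x + y |x y. x \<in> Vp \<and> y \<in> Vm} + dim (Vp \<inter> Vm) = dim Vp + dim Vm"
      by (rule dim_sums_Int[OF Vps])
    moreover have "dim (Vp \<inter> Vm) = 0" using int0 by simp
    moreover have "dim {x + y |x y. x \<in> Vp \<and> y \<in> Vm} \<le> dim V"
    proof (intro dim_subset subsetI)
      fix z assume "z \<in> {x + y |x y. x \<in> Vp \<and> y \<in> Vm}"
      then obtain x y where "z = x + y" "x \<in> V" "y \<in> V" unfolding Vp_def Vm_def by blast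
      then show "z \<in> V" using subspace_add[OF less.prems(3)] by simp
    qed
    ultimately have "2 * dim Vp \<le> dim V" using d1 by linarith
    moreover have "k div 2 = Suc ((k - 2) div 2)" using k2 by (simp add: div_if)
    ultimately show ?thesis using IH by (metis (no_types) le_trans mult_le_mono2 power_Suc)
  qed
qed



definition outer :: "real^'n \<Rightarrow> real^'n^'n" where
  "outer v = (\<chi> i k. v $ i * v $ k)"

lemma inner_outer: "(S::real^'n^'n) \<bullet> outer v = v \<bullet> (S *v v)"
  by (simp add: outer_def inner_vec_def matrix_vector_mult_def sum_distrib_left mult_ac)

lemma outer_sym: "transpose (outer v) = outer v"
  by (simp add: outer_def transpose_def vec_eq_iff mult.commute)

lemma subspace_sym: "subspace {M::real^'n^'n. transpose M = M}"
  unfolding subspace_def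
  by (auto simp: transpose_def vec_eq_iff)

lemma mm_sum_left: "(\<Sum>i\<in>S. f i) ** (M::'a::semiring_1^'n^'n) = (\<Sum>i\<in>S. f i ** M)"
  by (induction S rule: infinite_finite_induct) (auto simp: matrix_add_rdistrib')

lemma mm_sum_right: "(M::'a::semiring_1^'n^'n) ** (\<Sum>i\<in>S. f i) = (\<Sum>i\<in>S. M ** f i)"
  by (induction S rule: infinite_finite_induct) (auto simp: matrix_add_ldistrib)

lemma axis_inner1: "axis i 1 \<bullet> (v::real^'n) = v $ i"
  by (simp add: inner_axis')

lemma mv_axis: "((A::real^'n^'n) *v axis k 1) $ i = A $ i $ k"
  by (simp add: matrix_vector_mult_basis column_def)



theorem lemma2p7:
  fixes E :: "real^('n::finite + 'm::finite)^('n + 'm)"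
    and \<Lambda> :: "real^'m^'n"
    and X :: "'n \<Rightarrow> complex^'d::finite^'d"
  assumes ext: "E extreme_point_of elliptope"
    and rankA: "rank (blkA E) = CARD('n)"
    and rankE: "rank E = CARD('n)"
    and hC: "blkC E = blkA E ** \<Lambda>"
    and hB: "blkB E = transpose \<Lambda> ** blkA E ** \<Lambda>"
    and herm: "\<And>i. hermitian_cmat (X i)"
    and sq: "\<And>i. X i ** X i = mat 1"
    and sqL: "\<And>j. (\<Sum>i\<in>UNIV. \<Lambda> $ i $ j *\<^sub>R X i) ** (\<Sum>i\<in>UNIV. \<Lambda> $ i $ j *\<^sub>R X i) = mat 1"
  shows "(\<forall>\<mu> :: real^'n.
           (\<Sum>i\<in>UNIV. \<mu> $ i *\<^sub>R X i) ** (\<Sum>i\<in>UNIV. \<mu> $ i *\<^sub>R X i)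
             = (\<mu> \<bullet> (blkA E *v \<mu>)) *\<^sub>R mat 1)
         \<and> CARD('d) \<ge> 2 ^ (CARD('n) div 2)"
proof -
  define A where "A = blkA E"
  have Eell: "E \<in> elliptope" using ext by (simp add: extreme_point_of_def)
  have Esym: "E $ p $ q = E $ q $ p" for p q
  proof -
    have tE: "transpose E = E" using Eell unfolding elliptope_def psd_mat_def by blast
    have "transpose E $ q $ p = E $ p $ q" by (simp add: transpose_def)
    then show ?thesis using tE by simp
  qed
  have Epsd: "0 \<le> x \<bullet> (E *v x)" for x using Eell unfolding elliptope_def psd_mat_def by blast
  have Ediag: "E $ p $ p = 1" for p using Eell unfolding elliptope_def by blast
  have Asym: "transpose A = A"
    by (simp add: A_def blkA_def transpose_def vec_eq_iff Esym)
  define w :: "'n + 'm \<Rightarrow> real^'n" where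
    "w p = (case p of Inl i \<Rightarrow> axis i 1 | Inr j \<Rightarrow> column j \<Lambda>)" for p
  have AL: "(A *v column j \<Lambda>) $ i = E $ Inl i $ Inr j" for i j
  proof -
    have "E $ Inl i $ Inr j = (A ** \<Lambda>) $ i $ j" using hC by (simp add: A_def blkC_def vec_eq_iff)
    then show ?thesis by (simp add: matrix_matrix_mult_def matrix_vector_mult_def column_def)
  qed
  have LAL: "column j \<Lambda> \<bullet> (A *v column l \<Lambda>) = E $ Inr j $ Inr l" for j l
  proof -
    have "E $ Inr j $ Inr l = (transpose \<Lambda> ** A ** \<Lambda>) $ j $ l" using hB by (simp add: A_def blkB_def vec_eq_iff)
    also have "\<dots> = (\<Sum>k\<in>UNIV. \<Sum>i\<in>UNIV. \<Lambda> $ i $ j * A $ i $ k * \<Lambda> $ k $ l)"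
      by (simp add: matrix_matrix_mult_def transpose_def sum_distrib_right)
    also have "\<dots> = (\<Sum>i\<in>UNIV. \<Sum>k\<in>UNIV. \<Lambda> $ i $ j * A $ i $ k * \<Lambda> $ k $ l)"
      by (rule sum.swap)
    also have "\<dots> = column j \<Lambda> \<bullet> (A *v column l \<Lambda>)"
      by (simp add: matrix_vector_mult_def column_def inner_vec_def sum_distrib_left mult.assoc)
    finally show ?thesis by simp
  qed
  have rep: "E $ p $ q = w p \<bullet> (A *v w q)" for p q
  proof (cases p; cases q)
    fix i k assume "p = Inl i" "q = Inl k"
    then show ?thesis by (simp add: w_def axis_inner1 mv_axis A_def blkA_def)
  next
    fix i j assume "p = Inl i" "q = Inr j"
    then show ?thesis by (simp add: w_def axis_inner1 AL)
  next
    fix j i assume "p = Inr j" "q = Inl i"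
    then show ?thesis using sym_form[OF Asym, of "axis i 1" "column j \<Lambda>"]
      by (simp add: w_def axis_inner1 AL Esym)
  next
    fix j l assume "p = Inr j" "q = Inr l"
    then show ?thesis by (simp add: w_def LAL)
  qed
  have Apsd: "0 \<le> x \<bullet> (A *v x)" for x
  proof -
    define x' :: "real^('n+'m)" where "x' = (\<chi> p. case p of Inl i \<Rightarrow> x $ i | Inr j \<Rightarrow> 0)"
    have "(\<Sum>p\<in>UNIV. x' $ p *\<^sub>R w p) = (\<Sum>i\<in>UNIV. x $ i *\<^sub>R axis i 1)"
      by (subst UNIV_Plus_UNIV[symmetric], subst sum.Plus) (simp_all add: x'_def w_def)
    also have "\<dots> = x" by (metis basis_expansion scalar_mult_eq_scaleR)
    finally have "x' \<bullet> (E *v x') = x \<bullet> (A *v x)" using quad_rep[of E w A x', OF rep] by simp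
    then show ?thesis using Epsd[of x'] by simp
  qed
  have Ainj: "A *v y = 0 \<Longrightarrow> y = 0" for y
  proof -
    have "inj ((*v) A)" using rankA full_rank_injective[of A] by (simp add: A_def)
    moreover assume "A *v y = 0"
    then have "A *v y = A *v 0" by simp
    ultimately show "y = 0" by (rule injD)
  qed
  have Apd: "0 < x \<bullet> (A *v x)" if "x \<noteq> 0" for x
  proof -
    have "x \<bullet> (A *v x) \<noteq> 0" using psd_kernel[OF Apsd Asym] Ainj that by blast
    then show ?thesis using Apsd[of x] by linarith
  qed
  define Y where "Y \<mu> = (\<Sum>i\<in>UNIV. \<mu> $ i *\<^sub>R X i)" for \<mu>
  define D where "D M = (\<Sum>i\<in>UNIV. \<Sum>k\<in>UNIV. M $ i $ k *\<^sub>R (X i ** X k))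
      - (\<Sum>i\<in>UNIV. \<Sum>k\<in>UNIV. A $ i $ k * M $ i $ k) *\<^sub>R (mat 1 :: complex^'d^'d)" for M :: "real^'n^'n"
  have Dlin: "linear D"
  proof (rule linearI)
    fix M N :: "real^'n^'n" and c :: real
    show "D (M + N) = D M + D N"
      by (simp add: D_def scaleR_add_left sum.distrib distrib_left algebra_simps)
    show "D (c *\<^sub>R M) = c *\<^sub>R D M"
      by (simp add: D_def scaleR_sum_right sum_distrib_left scaleR_diff_right mult_ac)
  qed
  have YY: "Y \<mu> ** Y \<mu> = (\<Sum>i\<in>UNIV. \<Sum>k\<in>UNIV. (\<mu> $ i * \<mu> $ k) *\<^sub>R (X i ** X k))" for \<mu>
  proof -
    have "Y \<mu> ** Y \<mu> = (\<Sum>k\<in>UNIV. \<mu> $ k *\<^sub>R (\<Sum>i\<in>UNIV. \<mu> $ i *\<^sub>R (X i ** X k)))"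
      unfolding Y_def
      by (simp add: mm_sum_left mm_sum_right matrix_scalar_ac scalar_matrix_assoc[symmetric])
    also have "\<dots> = (\<Sum>k\<in>UNIV. \<Sum>i\<in>UNIV. (\<mu> $ i * \<mu> $ k) *\<^sub>R (X i ** X k))"
      by (simp add: scaleR_sum_right mult.commute)
    also have "\<dots> = (\<Sum>i\<in>UNIV. \<Sum>k\<in>UNIV. (\<mu> $ i * \<mu> $ k) *\<^sub>R (X i ** X k))"
      by (rule sum.swap)
    finally show ?thesis .
  qed
  have qq: "\<mu> \<bullet> (A *v \<mu>) = (\<Sum>i\<in>UNIV. \<Sum>k\<in>UNIV. A $ i $ k * (\<mu> $ i * \<mu> $ k))" for \<mu>
    by (simp add: inner_vec_def matrix_vector_mult_def sum_distrib_left mult_ac)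
  have Dout: "D (outer \<mu>) = Y \<mu> ** Y \<mu> - (\<mu> \<bullet> (A *v \<mu>)) *\<^sub>R mat 1" for \<mu>
    unfolding D_def YY qq by (simp add: outer_def)
  have ifs: "(if c then (1::real) else 0) *\<^sub>R M = (if c then M else 0)" for c and M :: "complex^'d^'d"
    by simp
  have Yax: "Y (axis i 1) = X i" for i
    by (simp add: Y_def axis_def ifs sum.delta' cong: if_cong)
  have Ycol: "Y (column j \<Lambda>) = (\<Sum>i\<in>UNIV. \<Lambda> $ i $ j *\<^sub>R X i)" for j
    by (simp add: Y_def column_def)
  have qax: "axis i 1 \<bullet> (A *v axis i 1) = 1" for i
    using rep[of "Inl i" "Inl i"] Ediag[of "Inl i"] by (simp add: w_def)
  have qcol: "column j \<Lambda> \<bullet> (A *v column j \<Lambda>) = 1" for j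
    using rep[of "Inr j" "Inr j"] Ediag[of "Inr j"] by (simp add: w_def)
  define Sset where "Sset = range (\<lambda>i. outer (axis i 1 :: real^'n)) \<union> range (\<lambda>j. outer (column j \<Lambda>))"
  have D0: "D M = 0" if "M \<in> Sset" for M
    using that unfolding Sset_def
    by (auto simp: Dout Yax Ycol qax qcol sq sqL)
  have wS: "outer (w p) \<in> Sset" for p
    by (cases p) (auto simp: w_def Sset_def)
  have inspan: "outer \<mu> \<in> span Sset" for \<mu>
  proof (rule ccontr)
    assume nin: "outer \<mu> \<notin> span Sset"
    define T where "T = insert (outer \<mu>) Sset"
    have "span Sset \<subseteq> span T" unfolding T_def by (intro span_mono) auto
    moreover have "outer \<mu> \<in> span T" unfolding T_def by (intro span_base) auto
    ultimately have "span Sset \<subset> span T" using nin by blast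
    then obtain Sm where Sm: "Sm \<noteq> 0" "Sm \<in> span T" "\<And>y. y \<in> span Sset \<Longrightarrow> orthogonal Sm y"
      using orthogonal_to_subspace_exists_gen by blast
    have "T \<subseteq> {M. transpose M = M}" unfolding T_def Sset_def using outer_sym by auto
    then have "span T \<subseteq> {M. transpose M = M}" by (rule span_minimal[OF _ subspace_sym])
    then have Ssym: "transpose Sm = Sm" using Sm(2) by blast
    have diag: "w p \<bullet> (Sm *v w p) = 0" for p
    proof -
      have "orthogonal Sm (outer (w p))" using Sm(3) wS span_base by blast
      then show ?thesis by (simp add: orthogonal_def inner_outer)
    qed
    obtain i k where ik: "Sm $ i $ k \<noteq> 0" using Sm(1) by (metis vec_eq_iff zero_index)
    have nz: "w (Inl i) \<bullet> (Sm *v w (Inl k)) \<noteq> 0" using ik by (simp add: w_def axis_inner1 mv_axis)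
    show False by (rule not_extreme[OF ext rep Asym Ssym Apd diag nz])
  qed
  have part1: "Y \<mu> ** Y \<mu> = (\<mu> \<bullet> (A *v \<mu>)) *\<^sub>R mat 1" for \<mu>
  proof -
    have "D (outer \<mu>) = 0" by (rule linear_eq_0_on_span[OF Dlin D0 inspan])
    then show ?thesis by (simp add: Dout)
  qed
  have Yadd: "Y (a + b) = Y a + Y b" for a b
    by (simp add: Y_def scaleR_add_left sum.distrib)
  obtain i0 :: 'd where True by blast
  have v0: "(axis i0 1 :: complex^'d) \<noteq> 0" by (simp add: axis_eq_0_iff)
  have "2 * 2 ^ (CARD('n) div 2) \<le> dim (UNIV :: (complex^'d) set)"
    by (rule cliff_ind[OF Yadd part1 Asym Apd subspace_UNIV _ subspace_UNIV _ v0]) auto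
  then have part2: "2 ^ (CARD('n) div 2) \<le> CARD('d)" by simp
  show ?thesis using part1 part2 unfolding Y_def A_def by blast
qed


end
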